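(* Let $A,B,C,D,E\in\mathbb{C}$, $P(x)=A+4Bx+6Cx^2+4Dx^3+Ex^4$, $R(x,y)=A+2B(x+y)+3C(x^2+y^2)+2Dxy(x+y)+Ex^2y^2$, and $$\hat R(x,y)=-4B^2+4(AD-3BC)(x+y)+2(AE+2BD-9C^2)(x^2+y^2)+4(BE-3CD)xy(x+y)-4D^2x^2y^2-(AE+4BD-9C^2)(x-y)^2.$$ For $\theta\in\mathbb{C}$ let $\Phi_\theta(x,y)=-(x-y)^2\theta^2+2R(x,y)\theta+\hat R(x,y)$, and write $\Phi_\theta(x,y)=a_\theta(x)y^2+2b_\theta(x)y+c_\theta(x)$ with $a_\theta,b_\theta,c_\theta$ polynomials in $x$. Let $G_\theta=b_\theta^2-a_\theta c_\theta$. Then $G_\theta(x)=p(\theta)P(x)$, where $$p(\theta)=2\theta(\theta-3C)^2+2\theta(4BD-AE)+4B^2E+4AD^2-24BCD.$$ *)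

theory Defs
  imports Complex_Main "HOL-Computational_Algebra.Polynomial"
begin

definition quartP :: "complex \<Rightarrow> complex \<Rightarrow> complex \<Rightarrow> complex \<Rightarrow> complex \<Rightarrow> complex \<Rightarrow> complex" where
  "quartP A B C D E x = A + 4*B*x + 6*C*x^2 + 4*D*x^3 + E*x^4"

definition RR :: "complex \<Rightarrow> complex \<Rightarrow> complex \<Rightarrow> complex \<Rightarrow> complex \<Rightarrow> complex \<Rightarrow> complex \<Rightarrow> complex" where
  "RR A B C D E x y = A + 2*B*(x+y) + 3*C*(x^2+y^2) + 2*D*x*y*(x+y) + E*x^2*y^2"

definition RRhat :: "complex \<Rightarrow> complex \<Rightarrow> complex \<Rightarrow> complex \<Rightarrow> complex \<Rightarrow> complex \<Rightarrow> complex \<Rightarrow> complex" where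
  "RRhat A B C D E x y = - 4*B^2 + 4*(A*D - 3*B*C)*(x+y) + 2*(A*E + 2*B*D - 9*C^2)*(x^2+y^2)
     + 4*(B*E - 3*C*D)*x*y*(x+y) - 4*D^2*x^2*y^2 - (A*E + 4*B*D - 9*C^2)*(x-y)^2"

definition Phi :: "complex \<Rightarrow> complex \<Rightarrow> complex \<Rightarrow> complex \<Rightarrow> complex \<Rightarrow> complex \<Rightarrow> complex \<Rightarrow> complex \<Rightarrow> complex" where
  "Phi A B C D E t x y = 2*RR A B C D E x y*t - (x-y)^2*t^2 + RRhat A B C D E x y"

definition pth :: "complex \<Rightarrow> complex \<Rightarrow> complex \<Rightarrow> complex \<Rightarrow> complex \<Rightarrow> complex \<Rightarrow> complex" where
  "pth A B C D E t = 2*t*(t - 3*C)^2 + 2*t*(4*B*D - A*E) + 4*B^2*E + 4*A*D^2 - 24*B*C*D"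

end

theory Submission
  imports Defs
begin

lemma key:
  fixes A B C D E t x :: complex
  shows "((Phi A B C D E t x 1 - Phi A B C D E t x (-1)) / 4)^2
     - ((Phi A B C D E t x 1 + Phi A B C D E t x (-1)) / 2 - Phi A B C D E t x 0) * Phi A B C D E t x 0
     = pth A B C D E t * quartP A B C D E x"
  unfolding Phi_def RR_def RRhat_def pth_def quartP_def
  by (simp add: field_simps power2_eq_square power3_eq_cube power4_eq_xxxx)

theorem theorem5:
  fixes A B C D E t :: complex and a b c :: "complex poly"
  assumes "\<forall>x y. Phi A B C D E t x y = poly a x * y^2 + 2 * poly b x * y + poly c x"
  shows "b^2 - a*c = smult (pth A B C D E t) [:A, 4*B, 6*C, 4*D, E:] \<and>
    (\<forall>x. (poly b x)^2 - poly a x * poly c x = pth A B C D E t * quartP A B C D E x)"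
proof -
  have pw: "(poly b x)^2 - poly a x * poly c x = pth A B C D E t * quartP A B C D E x" for x
  proof -
    have h0: "poly c x = Phi A B C D E t x 0" using assms by simp
    have h1: "Phi A B C D E t x 1 = poly a x + 2 * poly b x + poly c x" using assms by simp
    have h2: "Phi A B C D E t x (-1) = poly a x - 2 * poly b x + poly c x" using assms by simp
    have hb: "poly b x = (Phi A B C D E t x 1 - Phi A B C D E t x (-1)) / 4" using h1 h2 by simp
    have ha: "poly a x = (Phi A B C D E t x 1 + Phi A B C D E t x (-1)) / 2 - Phi A B C D E t x 0"
      using h0 h1 h2 by (simp add: field_simps)
    show ?thesis unfolding hb ha h0 by (rule key)
  qed
  have "poly (b^2 - a*c) = poly (smult (pth A B C D E t) [:A, 4*B, 6*C, 4*D, E:])"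
  proof
    fix x
    show "poly (b^2 - a*c) x = poly (smult (pth A B C D E t) [:A, 4*B, 6*C, 4*D, E:]) x"
      using pw[of x] unfolding quartP_def
      by (simp add: algebra_simps power2_eq_square power3_eq_cube power4_eq_xxxx)
  qed
  then have "b^2 - a*c = smult (pth A B C D E t) [:A, 4*B, 6*C, 4*D, E:]"
    using poly_eq_poly_eq_iff by blast
  with pw show ?thesis by blast
qed

end
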